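(* Let $r\ge4$ be an even integer and let $M$ be the binary matroid represented over $\mathrm{GF}(2)$ by the matrix $[I_r\;\;J_r-I_r]$, where $I_r$ is the $r\times r$ identity matrix and $J_r$ the $r\times r$ all-ones matrix. Then $M$ is not elementarily $(r,3)$-weakly base orderable.
   Context: An ordered pair $(B_1,B_2)$ of bases of a matroid has the elementary $k$-exchange property if there exist $k$-element subsets $X\subseteq B_1\setminus B_2$, $Y\subseteq B_2\setminus B_1$ and a bijection $\varphi\colon X\to Y$ such that $(B_1\setminus Z)\cup\varphi(Z)$ is a basis for every $Z\subseteq X$. A matroid is elementarily $(\alpha,k)$-weakly base orderable if every ordered pair $(B_1,B_2)$ of bases with $|B_1\setminus B_2|\ge\alpha$ has the elementary $k$-exchange property. *)

theory Defs
  imports Main "HOL-Library.Z2"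
begin

text \<open>The matrix [I_r | J_r - I_r] over GF(2) (type bit).  Columns are indexed by
  0..<2r, rows by 0..<r.  Column c < r is e_c; column r+j is the all-ones vector minus e_j.\<close>
definition mat_entry :: "nat \<Rightarrow> nat \<Rightarrow> nat \<Rightarrow> bit" where
  "mat_entry r i c = (if c < r then (if i = c then 1 else 0)
                      else (if i = c - r then 0 else 1))"

definition bin_indep :: "nat \<Rightarrow> nat set \<Rightarrow> bool" where
  "bin_indep r X \<longleftrightarrow> X \<subseteq> {..<2*r} \<and>
     (\<forall>S\<subseteq>X. S \<noteq> {} \<longrightarrow> (\<exists>i<r. (\<Sum>c\<in>S. mat_entry r i c) \<noteq> 0))"

definition bin_basis :: "nat \<Rightarrow> nat set \<Rightarrow> bool" where
  "bin_basis r B \<longleftrightarrow> bin_indep r B \<and> (\<forall>X. bin_indep r X \<longrightarrow> B \<subseteq> X \<longrightarrow> X = B)"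

definition elem_exchange :: "('a set \<Rightarrow> bool) \<Rightarrow> nat \<Rightarrow> 'a set \<Rightarrow> 'a set \<Rightarrow> bool" where
  "elem_exchange is_basis k B1 B2 \<longleftrightarrow>
     (\<exists>X Y \<phi>. X \<subseteq> B1 - B2 \<and> Y \<subseteq> B2 - B1 \<and> finite X \<and> card X = k \<and> card Y = k \<and>
        bij_betw \<phi> X Y \<and> (\<forall>Z\<subseteq>X. is_basis ((B1 - Z) \<union> \<phi> ` Z)))"

definition elem_wbo :: "('a set \<Rightarrow> bool) \<Rightarrow> nat \<Rightarrow> nat \<Rightarrow> bool" where
  "elem_wbo is_basis \<alpha> k \<longleftrightarrow>
     (\<forall>B1 B2. is_basis B1 \<and> is_basis B2 \<and> card (B1 - B2) \<ge> \<alpha> \<longrightarrow> elem_exchange is_basis k B1 B2)"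

end

theory Submission
  imports Defs
begin
lemma bit_of_nat: "(of_nat n :: bit) = (if even n then 0 else 1)"
  by (induct n) auto
lemma sum_e: "finite T \<Longrightarrow> T \<subseteq> {..<r} \<Longrightarrow> (\<Sum>c\<in>T. mat_entry r i c) = (if i \<in> T then 1 else 0)"
proof -
  assume a: "finite T" "T \<subseteq> {..<r}"
  have "(\<Sum>c\<in>T. mat_entry r i c) = (\<Sum>c\<in>T. if i = c then 1 else 0)"
    using a by (intro sum.cong) (auto simp: mat_entry_def)
  also have "\<dots> = (if i \<in> T then 1 else 0)" using a(1) by simp
  finally show ?thesis .
qed
lemma sum_f: "finite S \<Longrightarrow> S \<subseteq> {r..<2*r} \<Longrightarrow> (\<Sum>c\<in>S. mat_entry r i c) = of_nat (card (S - {r+i}))"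
proof -
  assume a: "finite S" "S \<subseteq> {r..<2*r}"
  have "(\<Sum>c\<in>S. mat_entry r i c) = (\<Sum>c\<in>S. if c \<in> S - {r+i} then 1 else 0)"
    using a by (intro sum.cong) (auto simp: mat_entry_def)
  also have "\<dots> = (\<Sum>c\<in>S \<inter> (S - {r+i}). 1)" using a(1) 
    by (rule sum.inter_restrict[symmetric])
  also have "S \<inter> (S - {r+i}) = S - {r+i}" by blast
  finally show ?thesis by simp
qed
lemma me_hi: "mat_entry r i (r + p) = (if i = p then 0 else 1)"
  by (simp add: mat_entry_def)

lemma dep: "S \<subseteq> B \<Longrightarrow> S \<noteq> {} \<Longrightarrow> \<forall>i<r. (\<Sum>c\<in>S. mat_entry r i c) = 0 \<Longrightarrow> \<not> bin_indep r B"
  unfolding bin_indep_def by blast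

lemma basis_indep: "bin_basis r B \<Longrightarrow> bin_indep r B"
  by (simp add: bin_basis_def)

lemma dep1: assumes "p < r" "insert (r+p) ({..<r} - {p}) \<subseteq> B" shows "\<not> bin_indep r B"
proof (rule dep[OF assms(2)])
  show "\<forall>i<r. (\<Sum>c\<in>insert (r+p) ({..<r} - {p}). mat_entry r i c) = 0"
  proof (intro allI impI)
    fix i assume "i < r"
    have "(\<Sum>c\<in>insert (r+p) ({..<r} - {p}). mat_entry r i c) = mat_entry r i (r+p) + (\<Sum>c\<in>{..<r} - {p}. mat_entry r i c)"
      by (subst sum.insert) auto
    also have "\<dots> = 0" using \<open>i<r\<close> by (subst sum_e) (auto simp: me_hi)
    finally show "(\<Sum>c\<in>insert (r+p) ({..<r} - {p}). mat_entry r i c) = 0" .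
  qed
qed auto

lemma dep2: assumes "p < r" "q < r" "p \<noteq> q" "{r+p, r+q, p, q} \<subseteq> B" shows "\<not> bin_indep r B"
proof (rule dep[OF assms(4)])
  show "\<forall>i<r. (\<Sum>c\<in>{r+p, r+q, p, q}. mat_entry r i c) = 0"
    using assms(1-3) by (auto simp: mat_entry_def)
qed auto

lemma dep3: assumes "a < r" "b < r" "c < r" "a \<noteq> b" "a \<noteq> c" "b \<noteq> c"
  "{r+a, r+b, r+c} \<union> ({..<r} - {a,b,c}) \<subseteq> B" shows "\<not> bin_indep r B"
proof (rule dep[OF assms(7)])
  show "\<forall>i<r. (\<Sum>x\<in>{r+a, r+b, r+c} \<union> ({..<r} - {a,b,c}). mat_entry r i x) = 0"
  proof (intro allI impI)
    fix i assume "i < r"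
    have "(\<Sum>x\<in>{r+a, r+b, r+c} \<union> ({..<r} - {a,b,c}). mat_entry r i x)
       = (\<Sum>x\<in>{r+a, r+b, r+c}. mat_entry r i x) + (\<Sum>x\<in>{..<r} - {a,b,c}. mat_entry r i x)"
      using assms(1-3) by (intro sum.union_disjoint) auto
    also have "\<dots> = 0" using assms(1-6) \<open>i<r\<close> by (subst sum_e) (auto simp: me_hi)
    finally show "(\<Sum>x\<in>{r+a, r+b, r+c} \<union> ({..<r} - {a,b,c}). mat_entry r i x) = 0" .
  qed
qed auto

lemma E_basis: "bin_basis r {..<r}"
  unfolding bin_basis_def
proof (intro conjI allI impI)
  show "bin_indep r {..<r}"
    unfolding bin_indep_def
  proof (intro conjI allI impI)
    fix S assume S: "S \<subseteq> {..<r}" "S \<noteq> {}"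
    then obtain i where "i \<in> S" by blast
    moreover have "finite S" using S finite_subset by blast
    ultimately show "\<exists>i<r. (\<Sum>c\<in>S. mat_entry r i c) \<noteq> 0" using S
      by (intro exI[of _ i]) (auto simp: sum_e)
  qed auto
next
  fix X assume X: "bin_indep r X" "{..<r} \<subseteq> X"
  show "X = {..<r}"
  proof (rule ccontr)
    assume "X \<noteq> {..<r}"
    then obtain c where c: "c \<in> X" "c \<notin> {..<r}" using X by blast
    then have "c < 2*r" using X(1) by (auto simp: bin_indep_def)
    then obtain p where p: "c = r + p" "p < r" using c(2)
      by (metis add_diff_inverse_nat lessThan_iff mult_2 nat_add_left_cancel_less)
    have "\<not> bin_indep r X" using dep1[of p r X] p c X(2) by auto
    then show False using X(1) by simp
  qed
qed

lemma F_basis: assumes "even r" shows "bin_basis r {r..<2*r}"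
  unfolding bin_basis_def
proof (intro conjI allI impI)
  show "bin_indep r {r..<2*r}"
    unfolding bin_indep_def
  proof (intro conjI allI impI)
    fix S assume S: "S \<subseteq> {r..<2*r}" "S \<noteq> {}"
    have fin: "finite S" using S finite_subset by blast
    show "\<exists>i<r. (\<Sum>c\<in>S. mat_entry r i c) \<noteq> 0"
    proof (cases "even (card S)")
      case True
      obtain s where s: "s \<in> S" using S by blast
      then obtain i where i: "s = r + i" "i < r" using S
        by (metis atLeastLessThan_iff le_add_diff_inverse mult_2 nat_add_left_cancel_less subsetD)
      have "card (S - {r+i}) = card S - 1" using s i fin by simp
      moreover have "card S \<ge> 1" using fin S(2) by (simp add: Suc_le_eq card_gt_0_iff)
      ultimately have "odd (card (S - {r+i}))" using True by simp
      then show ?thesis using i fin S by (intro exI[of _ i]) (simp add: sum_f bit_of_nat)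
    next
      case False
      have "S \<noteq> {r..<2*r}" using False assms by auto
      then obtain t where t: "t \<in> {r..<2*r}" "t \<notin> S" using S by blast
      then obtain i where i: "t = r + i" "i < r"
        by (metis atLeastLessThan_iff le_add_diff_inverse mult_2 nat_add_left_cancel_less)
      have "S - {r+i} = S" using t i by auto
      then show ?thesis using False i fin S by (intro exI[of _ i]) (simp add: sum_f bit_of_nat)
    qed
  qed auto
next
  fix X assume X: "bin_indep r X" "{r..<2*r} \<subseteq> X"
  show "X = {r..<2*r}"
  proof (rule ccontr)
    assume "X \<noteq> {r..<2*r}"
    then obtain c where c: "c \<in> X" "c \<notin> {r..<2*r}" using X by blast
    then have "c < r" using X(1) by (auto simp: bin_indep_def)
    let ?S = "insert c ({r..<2*r} - {r+c})"
    have "\<not> bin_indep r X"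
    proof (rule dep)
      show "?S \<subseteq> X" using c X(2) by auto
      show "?S \<noteq> {}" by simp
      show "\<forall>i<r. (\<Sum>x\<in>?S. mat_entry r i x) = 0"
      proof (intro allI impI)
        fix i assume i: "i < r"
        have "(\<Sum>x\<in>?S. mat_entry r i x) = mat_entry r i c + (\<Sum>x\<in>{r..<2*r} - {r+c}. mat_entry r i x)"
          using c by (subst sum.insert) auto
        also have "\<dots> = mat_entry r i c + of_nat (card ({r..<2*r} - {r+c} - {r+i}))"
          by (subst sum_f) auto
        also have "\<dots> = 0"
        proof (cases "i = c")
          case True
          have "card ({r..<2*r} - {r+c} - {r+i}) = r - 1" using True \<open>c<r\<close> by simp
          moreover have "odd (r - 1)" using assms \<open>c<r\<close> by simp
          ultimately show ?thesis using True \<open>c<r\<close> by (simp add: mat_entry_def bit_of_nat)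
        next
          case False
          have "card ({r..<2*r} - {r+c} - {r+i}) = r - 2" using False \<open>c<r\<close> i by simp
          moreover have "even (r - 2)" using assms by simp
          ultimately show ?thesis using False \<open>c<r\<close> by (simp add: mat_entry_def bit_of_nat)
        qed
        finally show "(\<Sum>x\<in>?S. mat_entry r i x) = 0" .
      qed
    qed
    then show False using X(1) by simp
  qed
qed


theorem theorem5p22:
  fixes r :: nat
  assumes "r \<ge> 4" and "even r"
  shows "\<not> elem_wbo (bin_basis r) r 3"
proof
  assume W: "elem_wbo (bin_basis r) r 3"
  have dis: "{..<r} - {r..<2*r} = {..<r}" by auto
  have "elem_exchange (bin_basis r) 3 {..<r} {r..<2*r}"
    using W E_basis F_basis[OF assms(2)] dis unfolding elem_wbo_def by auto
  then obtain X Y \<phi> where XY0: "X \<subseteq> {..<r} - {r..<2*r}" "Y \<subseteq> {r..<2*r} - {..<r}" "card X = 3"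
     "bij_betw \<phi> X Y" and B: "\<forall>Z\<subseteq>X. bin_basis r (({..<r} - Z) \<union> \<phi> ` Z)"
    unfolding elem_exchange_def by blast
  have XY: "X \<subseteq> {..<r}" "Y \<subseteq> {r..<2*r}" "card X = 3" "bij_betw \<phi> X Y"
    using XY0 by auto
  have B: "\<And>Z. Z \<subseteq> X \<Longrightarrow> bin_basis r (({..<r} - Z) \<union> \<phi> ` Z)" using B by blast
  obtain a b c where abc: "X = {a,b,c}" "a \<noteq> b" "b \<noteq> c" "a \<noteq> c"
    using XY(3) card_3_iff by metis
  have inj: "inj_on \<phi> X" and img: "\<phi> ` X = Y" using XY(4) by (auto simp: bij_betw_def)
  have hi: "\<And>x. x \<in> X \<Longrightarrow> \<exists>p<r. \<phi> x = r + p"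
  proof -
    fix x assume "x \<in> X"
    then have "\<phi> x \<in> {r..<2*r}" using img XY(2) by auto
    then show "\<exists>p<r. \<phi> x = r + p"
      by (metis atLeastLessThan_iff le_add_diff_inverse mult_2 nat_add_left_cancel_less)
  qed
  obtain pa where pa: "pa < r" "\<phi> a = r + pa" using hi abc by blast
  obtain pb where pb: "pb < r" "\<phi> b = r + pb" using hi abc by blast
  obtain pc where pc: "pc < r" "\<phi> c = r + pc" using hi abc by blast
  have lt: "a < r" "b < r" "c < r" using abc XY(1) by auto
  have distp: "pa \<noteq> pb" "pb \<noteq> pc" "pa \<noteq> pc"
    using inj abc pa pb pc by (auto simp: inj_on_def)
  have A: "\<phi> x \<noteq> r + x" if "x \<in> X" for x
  proof
    assume eq: "\<phi> x = r + x"
    have "x < r" using that XY(1) by auto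
    have "\<not> bin_indep r (({..<r} - {x}) \<union> \<phi> ` {x})"
      using dep1[OF \<open>x<r\<close>] eq by auto
    then show False using B[of "{x}"] that basis_indep by auto
  qed
  have P: "\<not> (p \<notin> {x,y} \<and> q \<notin> {x,y})" if "x \<in> X" "y \<in> X" "x \<noteq> y"
     "\<phi> x = r + p" "\<phi> y = r + q" "p < r" "q < r" for x y p q
  proof
    assume out: "p \<notin> {x,y} \<and> q \<notin> {x,y}"
    have "p \<noteq> q" using that inj by (auto simp: inj_on_def)
    have "\<not> bin_indep r (({..<r} - {x,y}) \<union> \<phi> ` {x,y})"
      using dep2[OF that(6,7) \<open>p\<noteq>q\<close>] out that by auto
    then show False using B[of "{x,y}"] that basis_indep by auto
  qed
  have C: "{pa,pb,pc} \<noteq> {a,b,c}"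
  proof
    assume eq: "{pa,pb,pc} = {a,b,c}"
    have img3: "\<phi> ` X = {r+a, r+b, r+c}" using abc pa pb pc eq by auto
    have "\<not> bin_indep r (({..<r} - X) \<union> \<phi> ` X)"
      by (rule dep3[OF lt abc(2) abc(4) abc(3)]) (use abc img3 in auto)
    then show False using B[of X] basis_indep by auto
  qed
  have a1: "pa \<noteq> a" "pb \<noteq> b" "pc \<noteq> c" using A abc pa pb pc by auto
  have p1: "pa \<in> {a,b} \<or> pb \<in> {a,b}" using P[of a b pa pb] abc pa pb by auto
  have p2: "pa \<in> {a,c} \<or> pc \<in> {a,c}" using P[of a c pa pc] abc pa pc by auto
  have p3: "pb \<in> {b,c} \<or> pc \<in> {b,c}" using P[of b c pb pc] abc pb pc by auto
  show False using a1 p1 p2 p3 C distp abc by auto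
qed

end
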